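(* Let $C'$ be an odd-like binary Euclidean LCD $[n,k,d]$ code with $k\ge 1$. Then there exist a binary Euclidean LCD $[n,k-1,d']$ code $C$ with $d'\ge d$ (when $k\ge 2$), a generator matrix $G$ of $C$, and a vector $\mathbf{y}\in C^{\perp_E}$ of odd Hamming weight, such that $C'$ is equivalent to the binary code with generator matrix $\begin{pmatrix}\mathbf{y}\\ G\end{pmatrix}$.
   Context: A binary $[n,k,d]$ code is a $k$-dimensional subspace of $\mathbb{F}_2^n$ with minimum nonzero Hamming weight $d$. $C^{\perp_E}$ is the dual with respect to $\langle x,y\rangle_E=\sum x_iy_i$; $C$ is LCD if $C\cap C^{\perp_E}=\{0\}$. A binary code is odd-like if it contains a codeword $x$ with $\sum x_i=1$. Two codes are equivalent if one is obtained from the other by a coordinate permutation (monomial transformation). *)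

theory Defs
  imports "HOL-Combinatorics.Permutations"
begin

text \<open>Binary vectors of length n are modelled as functions nat => bool
  (True = 1 in F_2) vanishing outside {0..<n}.  Addition in F_2^n is pointwise xor.
  A matrix is a list of rows.\<close>

definition vecs :: "nat \<Rightarrow> (nat \<Rightarrow> bool) set" where
  "vecs n = {x. \<forall>i\<ge>n. \<not> x i}"

definition zero_vec :: "nat \<Rightarrow> bool" where
  "zero_vec = (\<lambda>_. False)"

definition vadd :: "(nat \<Rightarrow> bool) \<Rightarrow> (nat \<Rightarrow> bool) \<Rightarrow> (nat \<Rightarrow> bool)" where
  "vadd x y = (\<lambda>i. x i \<noteq> y i)"

definition wt :: "nat \<Rightarrow> (nat \<Rightarrow> bool) \<Rightarrow> nat" where
  "wt n x = card {i. i < n \<and> x i}"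

definition ip :: "nat \<Rightarrow> (nat \<Rightarrow> bool) \<Rightarrow> (nat \<Rightarrow> bool) \<Rightarrow> bool" where
  "ip n x y = odd (card {i. i < n \<and> x i \<and> y i})"

text \<open>Binary linear code of length n (over F_2, closure under addition suffices).\<close>
definition bin_code :: "nat \<Rightarrow> (nat \<Rightarrow> bool) set \<Rightarrow> bool" where
  "bin_code n C \<longleftrightarrow> C \<subseteq> vecs n \<and> zero_vec \<in> C \<and> (\<forall>x\<in>C. \<forall>y\<in>C. vadd x y \<in> C)"

definition sum_rows :: "(nat \<Rightarrow> bool) list \<Rightarrow> nat set \<Rightarrow> (nat \<Rightarrow> bool)" where
  "sum_rows G S = (\<lambda>j. odd (card {i\<in>S. (G ! i) j}))"

definition row_span :: "(nat \<Rightarrow> bool) list \<Rightarrow> (nat \<Rightarrow> bool) set" where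
  "row_span G = {sum_rows G S | S. S \<subseteq> {..<length G}}"

definition lin_indep :: "(nat \<Rightarrow> bool) list \<Rightarrow> bool" where
  "lin_indep G \<longleftrightarrow> (\<forall>S \<subseteq> {..<length G}. sum_rows G S = zero_vec \<longrightarrow> S = {})"

definition gen_matrix :: "nat \<Rightarrow> (nat \<Rightarrow> bool) set \<Rightarrow> (nat \<Rightarrow> bool) list \<Rightarrow> bool" where
  "gen_matrix n C G \<longleftrightarrow> set G \<subseteq> vecs n \<and> lin_indep G \<and> row_span G = C"

definition code_dim :: "nat \<Rightarrow> (nat \<Rightarrow> bool) set \<Rightarrow> nat \<Rightarrow> bool" where
  "code_dim n C k \<longleftrightarrow> (\<exists>G. gen_matrix n C G \<and> length G = k)"

definition min_dist :: "nat \<Rightarrow> (nat \<Rightarrow> bool) set \<Rightarrow> nat" where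
  "min_dist n C = Min {wt n x | x. x \<in> C \<and> x \<noteq> zero_vec}"

definition dual :: "nat \<Rightarrow> (nat \<Rightarrow> bool) set \<Rightarrow> (nat \<Rightarrow> bool) set" where
  "dual n C = {y \<in> vecs n. \<forall>x\<in>C. \<not> ip n x y}"

definition is_LCD :: "nat \<Rightarrow> (nat \<Rightarrow> bool) set \<Rightarrow> bool" where
  "is_LCD n C \<longleftrightarrow> C \<inter> dual n C = {zero_vec}"

text \<open>Odd-like: contains x with sum x_i = 1 in F_2, i.e. odd weight.\<close>
definition odd_like :: "nat \<Rightarrow> (nat \<Rightarrow> bool) set \<Rightarrow> bool" where
  "odd_like n C \<longleftrightarrow> (\<exists>x\<in>C. odd (wt n x))"

text \<open>Equivalence by a coordinate permutation (monomial maps over F_2 are permutations).\<close>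
definition code_equiv :: "nat \<Rightarrow> (nat \<Rightarrow> bool) set \<Rightarrow> (nat \<Rightarrow> bool) set \<Rightarrow> bool" where
  "code_equiv n C D \<longleftrightarrow> (\<exists>\<sigma>. \<sigma> permutes {..<n} \<and> D = (\<lambda>x. x \<circ> \<sigma>) ` C)"

end

theory Submission
  imports Defs
begin

lemma odd_card_sdiff:
  assumes "finite A" "finite B"
  shows "odd (card ((A - B) \<union> (B - A))) = (odd (card A) \<noteq> odd (card B))"
proof -
  have d: "(A - B) \<inter> (B - A) = {}" by blast
  have "card ((A - B) \<union> (B - A)) = card (A - B) + card (B - A)"
    using card_Un_disjoint[OF _ _ d] assms by auto
  moreover have "card (A - B) = card A - card (A \<inter> B)" using assms by (simp add: card_Diff_subset_Int)
  moreover have "card (B - A) = card B - card (B \<inter> A)" using assms by (simp add: card_Diff_subset_Int)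
  moreover have "B \<inter> A = A \<inter> B" by blast
  moreover have "card (A \<inter> B) \<le> card A" "card (A \<inter> B) \<le> card B"
    using assms by (auto intro: card_mono)
  ultimately show ?thesis by presburger
qed

lemma ip_vadd: "ip n (vadd a b) y = (ip n a y \<noteq> ip n b y)"
proof -
  let ?A = "{i. i < n \<and> a i \<and> y i}" and ?B = "{i. i < n \<and> b i \<and> y i}"
  have "{i. i < n \<and> vadd a b i \<and> y i} = (?A - ?B) \<union> (?B - ?A)" by (auto simp: vadd_def)
  moreover have "finite ?A" "finite ?B" by auto
  ultimately show ?thesis unfolding ip_def using odd_card_sdiff[of ?A ?B] by presburger
qed

lemma ip_sym: "ip n a b = ip n b a"
proof -
  have "{i. i < n \<and> a i \<and> b i} = {i. i < n \<and> b i \<and> a i}" by blast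
  then show ?thesis unfolding ip_def by simp
qed

lemma ip_zero: "\<not> ip n zero_vec y"
  unfolding ip_def zero_vec_def by simp

lemma ip_self: "ip n y y = odd (wt n y)"
  unfolding ip_def wt_def by simp

lemma vadd_vadd: "vadd x (vadd x y) = y" unfolding vadd_def by auto
lemma vadd_comm: "vadd x y = vadd y x" unfolding vadd_def by auto
lemma vadd_self: "vadd x x = zero_vec" unfolding vadd_def zero_vec_def by auto
lemma vadd_zero: "vadd zero_vec x = x" unfolding vadd_def zero_vec_def by auto

lemma sum_rows_sdiff:
  assumes "finite S" "finite T"
  shows "sum_rows G ((S - T) \<union> (T - S)) = vadd (sum_rows G S) (sum_rows G T)"
proof
  fix j
  let ?A = "{i\<in>S. (G ! i) j}" and ?B = "{i\<in>T. (G ! i) j}"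
  have "{i\<in>(S - T) \<union> (T - S). (G ! i) j} = (?A - ?B) \<union> (?B - ?A)" by auto
  then show "sum_rows G ((S - T) \<union> (T - S)) j = vadd (sum_rows G S) (sum_rows G T) j"
    unfolding sum_rows_def vadd_def using odd_card_sdiff[of ?A ?B] assms by simp
qed

lemma row_span_img: "row_span H = (\<lambda>S. sum_rows H S) ` Pow {..<length H}"
  unfolding row_span_def by auto

lemma finite_row_span: "finite (row_span H)"
  unfolding row_span_img by simp

lemma row_span_closed:
  assumes "a \<in> row_span H" "b \<in> row_span H" shows "vadd a b \<in> row_span H"
proof -
  obtain S T where S: "S \<subseteq> {..<length H}" "a = sum_rows H S"
    and T: "T \<subseteq> {..<length H}" "b = sum_rows H T" using assms unfolding row_span_def by auto
  have f: "finite S" "finite T" using S T finite_subset by auto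
  have "vadd a b = sum_rows H ((S - T) \<union> (T - S))" using sum_rows_sdiff[OF f] S T by simp
  moreover have "(S - T) \<union> (T - S) \<subseteq> {..<length H}" using S T by auto
  ultimately show ?thesis unfolding row_span_def by blast
qed

lemma sum_rows_empty: "sum_rows H {} = zero_vec"
  unfolding sum_rows_def zero_vec_def by simp

lemma lin_indep_card: "lin_indep H \<longleftrightarrow> card (row_span H) = 2 ^ length H"
proof -
  let ?f = "\<lambda>S. sum_rows H S" and ?P = "Pow {..<length H}"
  have cP: "card ?P = 2 ^ length H" by (simp add: card_Pow)
  have "card (row_span H) = 2 ^ length H \<longleftrightarrow> inj_on ?f ?P"
    unfolding row_span_img using inj_on_iff_eq_card[of ?P ?f] cP by simp
  moreover have "inj_on ?f ?P \<longleftrightarrow> lin_indep H"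
  proof
    assume inj: "inj_on ?f ?P"
    show "lin_indep H" unfolding lin_indep_def
    proof (intro allI impI)
      fix S assume "S \<subseteq> {..<length H}" "sum_rows H S = zero_vec"
      then show "S = {}" using inj sum_rows_empty[of H] unfolding inj_on_def by auto
    qed
  next
    assume li: "lin_indep H"
    show "inj_on ?f ?P" unfolding inj_on_def
    proof (intro ballI impI)
      fix S T assume S: "S \<in> ?P" and T: "T \<in> ?P" and e: "sum_rows H S = sum_rows H T"
      have f: "finite S" "finite T" using S T finite_subset by auto
      have "sum_rows H ((S - T) \<union> (T - S)) = zero_vec"
        using sum_rows_sdiff[OF f] e vadd_self by simp
      moreover have "(S - T) \<union> (T - S) \<subseteq> {..<length H}" using S T by auto
      ultimately have "(S - T) \<union> (T - S) = {}" using li unfolding lin_indep_def by blast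
      then show "S = T" by blast
    qed
  qed
  ultimately show ?thesis by simp
qed

lemma sum_rows_cons:
  assumes "finite S"
  shows "sum_rows (x # H) S = (if 0 \<in> S then vadd x (sum_rows H {i. Suc i \<in> S}) else sum_rows H {i. Suc i \<in> S})"
proof
  fix j
  let ?T = "{i. Suc i \<in> S}"
  have fT: "finite ?T" using assms by (metis finite_vimageI inj_Suc vimage_def)
  have e: "{i\<in>S. ((x # H) ! i) j} = {i \<in> S \<inter> {0}. x j} \<union> Suc ` {i\<in>?T. (H ! i) j}"
    apply (rule set_eqI) subgoal for i by (cases i) auto done
  have c: "card {i\<in>S. ((x # H) ! i) j} = card {i \<in> S \<inter> {0}. x j} + card {i\<in>?T. (H ! i) j}"
    unfolding e by (subst card_Un_disjoint) (auto simp: card_image fT)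
  show "sum_rows (x # H) S j = (if 0 \<in> S then vadd x (sum_rows H ?T) else sum_rows H ?T) j"
    unfolding sum_rows_def vadd_def using c by (cases "0 \<in> S"; cases "x j") auto
qed

lemma row_span_memI: "S \<subseteq> {..<length G} \<Longrightarrow> sum_rows G S \<in> row_span G"
  unfolding row_span_def by auto

lemma row_span_cons: "row_span (x # H) = row_span H \<union> vadd x ` row_span H"
proof (rule equalityI)
  show "row_span (x # H) \<subseteq> row_span H \<union> vadd x ` row_span H"
  proof
    fix v assume "v \<in> row_span (x # H)"
    then obtain S where S: "S \<subseteq> {..<Suc (length H)}" "v = sum_rows (x # H) S"
      unfolding row_span_def by auto
    have fS: "finite S" using S(1) finite_subset by auto
    have "{i. Suc i \<in> S} \<subseteq> {..<length H}" using S(1) by auto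
    then have w: "sum_rows H {i. Suc i \<in> S} \<in> row_span H" by (rule row_span_memI)
    show "v \<in> row_span H \<union> vadd x ` row_span H"
    proof (cases "0 \<in> S")
      case True
      then have "v = vadd x (sum_rows H {i. Suc i \<in> S})" using S(2) sum_rows_cons[OF fS, of x H] by simp
      then show ?thesis using w by blast
    next
      case False
      then have "v = sum_rows H {i. Suc i \<in> S}" using S(2) sum_rows_cons[OF fS, of x H] by simp
      then show ?thesis using w by blast
    qed
  qed
next
  have A: "sum_rows H T \<in> row_span (x # H)" and B: "vadd x (sum_rows H T) \<in> row_span (x # H)"
    if T: "T \<subseteq> {..<length H}" for T
  proof -
    have fT: "finite T" using T finite_subset by auto
    have t1: "{i. Suc i \<in> Suc ` T} = T" by auto
    have t2: "{i. Suc i \<in> insert 0 (Suc ` T)} = T" by auto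
    have s1: "Suc ` T \<subseteq> {..<length (x # H)}" using T by auto
    have s2: "insert 0 (Suc ` T) \<subseteq> {..<length (x # H)}" using T by auto
    have e1: "sum_rows (x # H) (Suc ` T) = sum_rows H T"
      using sum_rows_cons[of "Suc ` T" x H] fT t1 by simp
    have m1: "sum_rows (x # H) (Suc ` T) \<in> row_span (x # H)" by (rule row_span_memI[OF s1])
    show "sum_rows H T \<in> row_span (x # H)" using m1 unfolding e1 .
    have e2: "sum_rows (x # H) (insert 0 (Suc ` T)) = vadd x (sum_rows H T)"
      using sum_rows_cons[of "insert 0 (Suc ` T)" x H] fT t2 by simp
    have m2: "sum_rows (x # H) (insert 0 (Suc ` T)) \<in> row_span (x # H)" by (rule row_span_memI[OF s2])
    show "vadd x (sum_rows H T) \<in> row_span (x # H)" using m2 unfolding e2 .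
  qed
  show "row_span H \<union> vadd x ` row_span H \<subseteq> row_span (x # H)"
    unfolding row_span_img[of H] using A B by blast
qed

lemma row_span_nil: "row_span [] = {zero_vec}"
  unfolding row_span_def using sum_rows_empty by auto

lemma row_span_sub:
  assumes "bin_code n D" "set H \<subseteq> D" shows "row_span H \<subseteq> D"
  using assms(2)
proof (induction H)
  case Nil then show ?case using assms(1) row_span_nil unfolding bin_code_def by auto
next
  case (Cons x H)
  have R: "row_span H \<subseteq> D" using Cons by simp
  have "x \<in> D" using Cons by simp
  then show ?case using R assms(1) unfolding row_span_cons bin_code_def by blast
qed

lemma finite_vecs: "finite (vecs n)"
proof -
  have "vecs n \<subseteq> (\<lambda>S i. i \<in> S) ` Pow {..<n}"
  proof
    fix x assume "x \<in> vecs n"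
    then have "x = (\<lambda>i. i \<in> {i. i < n \<and> x i})" unfolding vecs_def
      apply (intro ext) subgoal for i by (cases "i < n") auto done
    then show "x \<in> (\<lambda>S i. i \<in> S) ` Pow {..<n}" by blast
  qed
  then show ?thesis by (rule finite_subset) auto
qed

lemma exists_basis:
  assumes D: "bin_code n D" shows "\<exists>G. gen_matrix n D G"
proof -
  have fD: "finite D" using D finite_vecs finite_subset unfolding bin_code_def by blast
  have "\<exists>H. set H \<subseteq> D \<and> lin_indep H \<and> (row_span H = D \<or> length H = m)" for m
  proof (induction m)
    case 0
    have "lin_indep []" unfolding lin_indep_def by auto
    then show ?case by (intro exI[of _ "[]"]) auto
  next
    case (Suc m)
    then obtain H where H: "set H \<subseteq> D" "lin_indep H" "row_span H = D \<or> length H = m" by blast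
    show ?case
    proof (cases "row_span H = D")
      case True then show ?thesis using H by blast
    next
      case False
      then have len: "length H = m" using H by auto
      have sub: "row_span H \<subseteq> D" using row_span_sub[OF D H(1)] .
      then obtain x where x: "x \<in> D" "x \<notin> row_span H" using False by blast
      have disj: "row_span H \<inter> vadd x ` row_span H = {}"
      proof (rule ccontr)
        assume "row_span H \<inter> vadd x ` row_span H \<noteq> {}"
        then obtain r r' where r: "r \<in> row_span H" "r' \<in> row_span H" "r = vadd x r'" by blast
        then have "x = vadd r r'" unfolding vadd_def by auto
        then show False using row_span_closed[OF r(1,2)] x by simp
      qed
      have "inj (vadd x)" by (metis injI vadd_vadd)
      then have "card (vadd x ` row_span H) = card (row_span H)" by (simp add: card_image inj_on_subset)
      then have "card (row_span (x # H)) = 2 * card (row_span H)"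
        unfolding row_span_cons using card_Un_disjoint[OF finite_row_span _ disj] finite_row_span by simp
      then have "lin_indep (x # H)" using H(2) lin_indep_card len by simp
      then show ?thesis using x H len by (intro exI[of _ "x # H"]) auto
    qed
  qed
  then obtain H where H: "set H \<subseteq> D" "lin_indep H" "row_span H = D \<or> length H = card D" by blast
  have "row_span H = D"
  proof (rule ccontr)
    assume "row_span H \<noteq> D"
    then have "length H = card D" using H by auto
    then have "card (row_span H) = 2 ^ card D" using H(2) lin_indep_card by simp
    moreover have "card (row_span H) \<le> card D" using row_span_sub[OF D H(1)] fD card_mono by blast
    ultimately show False using less_exp[of "card D"] by simp
  qed
  moreover have "set H \<subseteq> vecs n" using H(1) D unfolding bin_code_def by auto
  ultimately show ?thesis unfolding gen_matrix_def using H(2) by blast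
qed

lemma card_row_span_gen:
  assumes "gen_matrix n C G" shows "card C = 2 ^ length G"
  using assms lin_indep_card unfolding gen_matrix_def by auto

lemma wt_le: "wt n x \<le> n"
proof -
  have "{i. i < n \<and> x i} \<subseteq> {..<n}" by auto
  then have "card {i. i < n \<and> x i} \<le> card {..<n}" by (rule card_mono[rotated]) simp
  then show ?thesis unfolding wt_def by simp
qed

theorem theorem3p11:
  fixes n k d :: nat and C' :: "(nat \<Rightarrow> bool) set"
  assumes "bin_code n C'" and "code_dim n C' k" and "k \<ge> 1"
    and "min_dist n C' = d"
    and "is_LCD n C'" and "odd_like n C'"
  shows "\<exists>C G y. bin_code n C \<and> is_LCD n C \<and> code_dim n C (k - 1)
           \<and> (k \<ge> 2 \<longrightarrow> min_dist n C \<ge> d)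
           \<and> gen_matrix n C G
           \<and> y \<in> dual n C \<and> odd (wt n y)
           \<and> code_equiv n C' (row_span (y # G))"
proof -
  note bc = assms(1)
  obtain G' where G': "gen_matrix n C' G'" "length G' = k" using assms(2) unfolding code_dim_def by blast
  have cC': "card C' = 2 ^ k" using card_row_span_gen[OF G'(1)] G'(2) by simp
  have fC': "finite C'" using bc finite_vecs finite_subset unfolding bin_code_def by metis
  obtain y where y: "y \<in> C'" "odd (wt n y)" using assms(6) unfolding odd_like_def by blast
  have yy: "ip n y y" using y(2) ip_self by simp
  define C where "C = {c \<in> C'. \<not> ip n c y}"
  have CC': "C \<subseteq> C'" unfolding C_def by blast
  have zC: "zero_vec \<in> C" using bc ip_zero unfolding C_def bin_code_def by blast
  have addC: "vadd a b \<in> C" if "a \<in> C" "b \<in> C" for a b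
  proof -
    have "vadd a b \<in> C'" using that bc unfolding C_def bin_code_def by blast
    moreover have "\<not> ip n (vadd a b) y" using that ip_vadd unfolding C_def by simp
    ultimately show ?thesis unfolding C_def by blast
  qed
  have bcC: "bin_code n C" using bc CC' zC addC unfolding bin_code_def by blast
  have img: "vadd y ` C = {c \<in> C'. ip n c y}"
  proof (rule equalityI)
    show "vadd y ` C \<subseteq> {c \<in> C'. ip n c y}"
    proof
      fix v assume "v \<in> vadd y ` C"
      then obtain c where c: "c \<in> C" "v = vadd y c" by blast
      have "v \<in> C'" using c y(1) bc CC' unfolding bin_code_def by blast
      moreover have "ip n v y" using c yy ip_vadd unfolding C_def by simp
      ultimately show "v \<in> {c \<in> C'. ip n c y}" by blast
    qed
  next
    show "{c \<in> C'. ip n c y} \<subseteq> vadd y ` C"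
    proof
      fix v assume v: "v \<in> {c \<in> C'. ip n c y}"
      have "vadd y v \<in> C'" using v y(1) bc unfolding bin_code_def by blast
      moreover have "\<not> ip n (vadd y v) y" using v yy ip_vadd by simp
      ultimately have "vadd y v \<in> C" unfolding C_def by blast
      moreover have "v = vadd y (vadd y v)" by (simp add: vadd_vadd)
      ultimately show "v \<in> vadd y ` C" by blast
    qed
  qed
  have "C' = C \<union> {c \<in> C'. ip n c y}" unfolding C_def by blast
  then have split: "C' = C \<union> vadd y ` C" by (simp only: img)
  have "C \<inter> {c \<in> C'. ip n c y} = {}" unfolding C_def by blast
  then have disj: "C \<inter> vadd y ` C = {}" by (simp only: img)
  have fC: "finite C" using fC' CC' finite_subset by blast
  have "inj (vadd y)" by (metis injI vadd_vadd)
  then have "card (vadd y ` C) = card C" by (simp add: card_image inj_on_subset)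
  then have "card C' = 2 * card C" using split card_Un_disjoint[OF fC _ disj] fC by simp
  moreover have "(2::nat) ^ k = 2 * 2 ^ (k - 1)" using assms(3) by (cases k) auto
  ultimately have cC: "card C = 2 ^ (k - 1)" using cC' by simp
  obtain G where G: "gen_matrix n C G" using exists_basis[OF bcC] by blast
  have lG: "length G = k - 1" using card_row_span_gen[OF G] cC by simp
  have dimC: "code_dim n C (k - 1)" using G lG unfolding code_dim_def by blast
  have yv: "y \<in> vecs n" using y(1) bc unfolding bin_code_def by blast
  have ydual: "y \<in> dual n C" using yv unfolding dual_def C_def by blast
  have lcd: "is_LCD n C"
    unfolding is_LCD_def
  proof (rule equalityI)
    have "zero_vec \<in> vecs n" using bc unfolding bin_code_def by blast
    moreover have "\<not> ip n x zero_vec" for x using ip_sym[of n x zero_vec] ip_zero[of n x] by simp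
    ultimately have "zero_vec \<in> dual n C" unfolding dual_def by simp
    then show "{zero_vec} \<subseteq> C \<inter> dual n C" using zC by simp
    show "C \<inter> dual n C \<subseteq> {zero_vec}"
    proof
      fix c assume c: "c \<in> C \<inter> dual n C"
      have cv: "c \<in> vecs n" using c unfolding dual_def by blast
      have "\<not> ip n x c" if x: "x \<in> C'" for x
      proof (cases "x \<in> C")
        case True then show ?thesis using c unfolding dual_def by blast
      next
        case False
        have "x \<in> C \<union> vadd y ` C" using x split by simp
        then have "x \<in> vadd y ` C" using False by simp
        then obtain c0 where c0: "c0 \<in> C" "x = vadd y c0" by blast
        have "\<not> ip n c0 c" using c c0 unfolding dual_def by blast
        moreover have "\<not> ip n y c" using c ip_sym[of n y c] unfolding C_def by simp
        ultimately show ?thesis using c0 ip_vadd by simp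
      qed
      then have "c \<in> dual n C'" using cv unfolding dual_def by blast
      moreover have "c \<in> C'" using c CC' by blast
      ultimately have "c \<in> C' \<inter> dual n C'" by simp
      then show "c \<in> {zero_vec}" using assms(5) unfolding is_LCD_def by simp
    qed
  qed
  have md: "min_dist n C \<ge> d" if k2: "k \<ge> 2"
  proof -
    have "(2::nat) ^ 1 \<le> 2 ^ (k - 1)" by (rule power_increasing) (use k2 in auto)
    then have c2: "card C \<ge> 2" using cC by simp
    have "\<exists>c\<in>C. c \<noteq> zero_vec"
    proof (rule ccontr)
      assume "\<not> (\<exists>c\<in>C. c \<noteq> zero_vec)"
      then have "C \<subseteq> {zero_vec}" by blast
      then have "card C \<le> card {zero_vec}" by (rule card_mono[rotated]) simp
      then show False using c2 by simp
    qed
    then obtain c where c: "c \<in> C" "c \<noteq> zero_vec" by blast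
    let ?M = "{wt n x | x. x \<in> C \<and> x \<noteq> zero_vec}"
    let ?N = "{wt n x | x. x \<in> C' \<and> x \<noteq> zero_vec}"
    have sub: "?M \<subseteq> ?N" using CC' by blast
    have ne: "?M \<noteq> {}" using c by blast
    have fin: "finite ?N" by (rule finite_subset[of _ "{..n}"]) (auto simp: wt_le)
    have "Min ?N \<le> Min ?M" by (rule Min_antimono[OF sub ne fin])
    then show ?thesis using assms(4) unfolding min_dist_def by simp
  qed
  have span: "row_span (y # G) = C'"
    using G split unfolding row_span_cons gen_matrix_def by simp
  have eqv: "code_equiv n C' (row_span (y # G))"
    unfolding code_equiv_def span
    by (intro exI[of _ id]) (simp add: permutes_id)
  show ?thesis
    apply (rule exI[of _ C], rule exI[of _ G], rule exI[of _ y])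
    using bcC lcd dimC md G ydual y(2) eqv by simp
qed

end
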